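(* For $\theta,\rho\in\mathbb{R}$ let $a_0=\tfrac14(1-\cos2\theta-\sin2\theta-\cos2\rho-\sin2\rho+\cos(2\theta-2\rho)+\sin(2\theta-2\rho))$, $a_1=\tfrac14(1+\cos2\theta-\sin2\theta+\cos2\rho-\sin2\rho+\cos(2\theta-2\rho)-\sin(2\theta-2\rho))$, $a_2=\tfrac12(1-\cos(2\theta-2\rho)-\sin(2\theta-2\rho))$, $a_3=\tfrac12(1-\cos(2\theta-2\rho)+\sin(2\theta-2\rho))$, $a_4=\tfrac14(1+\cos2\theta+\sin2\theta+\cos2\rho+\sin2\rho+\cos(2\theta-2\rho)+\sin(2\theta-2\rho))$, $a_5=\tfrac14(1-\cos2\theta+\sin2\theta-\cos2\rho+\sin2\rho+\cos(2\theta-2\rho)-\sin(2\theta-2\rho))$, and $m_0^{(\theta,\rho)}(z)=\frac{1}{\sqrt2}\sum_{k=0}^5a_kz^k$. Then: (a) $m_0^{(\theta,\rho)}(z)$ is divisible by $(1+z)^2$ if and only if $\cos2\theta+\cos2\rho=\tfrac12$. (b) $m_0^{(\theta,\rho)}(z)$ is divisible by $(1+z)^3$ if and only if $\cos2\theta+\cos2\rho=\tfrac12$ and $\sin2\theta+\sin2\rho=2\sin(2\theta-2\rho)$; equivalently, if and only if $(\theta,\rho)$ equals $(\theta_0,\rho_0)$ with $\theta_0=\cos^{-1}\sqrt[4]{5/32}$ and $\rho_0=\cos^{-1}\sqrt{5/4-\sqrt{5/32}}$, or is obtained from this pair by $(\theta,\rho)\mapsto(\theta+m\pi,\rho+n\pi)$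 with $m,n\in\mathbb{Z}$, or by $(\theta,\rho)\mapsto(-\theta,-\rho)$, or by both.
   Context: These $a_k$ are the filter coefficients of the genus-3, scale-2 loop $A(z)=V(Q_\theta^\perp+zQ_\theta)(Q_\rho^\perp+zQ_\rho)$, where $Q_\theta$ is the projection onto $(\cos\theta,\sin\theta)^{T}$ and $V$ is proportional to $\begin{pmatrix}1&1\\1&-1\end{pmatrix}$; divisibility is in the polynomial ring $\mathbb{C}[z]$. *)

theory Defs
  imports "HOL-Analysis.Analysis" "HOL-Computational_Algebra.Polynomial"
begin

definition filt_coeffs :: "real \<Rightarrow> real \<Rightarrow> real list" where
  "filt_coeffs \<theta> \<rho> =
    [ (1 - cos (2*\<theta>) - sin (2*\<theta>) - cos (2*\<rho>) - sin (2*\<rho>)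
         + cos (2*\<theta> - 2*\<rho>) + sin (2*\<theta> - 2*\<rho>)) / 4,
      (1 + cos (2*\<theta>) - sin (2*\<theta>) + cos (2*\<rho>) - sin (2*\<rho>)
         + cos (2*\<theta> - 2*\<rho>) - sin (2*\<theta> - 2*\<rho>)) / 4,
      (1 - cos (2*\<theta> - 2*\<rho>) - sin (2*\<theta> - 2*\<rho>)) / 2,
      (1 - cos (2*\<theta> - 2*\<rho>) + sin (2*\<theta> - 2*\<rho>)) / 2,
      (1 + cos (2*\<theta>) + sin (2*\<theta>) + cos (2*\<rho>) + sin (2*\<rho>)
         + cos (2*\<theta> - 2*\<rho>) + sin (2*\<theta> - 2*\<rho>)) / 4,
      (1 - cos (2*\<theta>) + sin (2*\<theta>) - cos (2*\<rho>) + sin (2*\<rho>)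
         + cos (2*\<theta> - 2*\<rho>) - sin (2*\<theta> - 2*\<rho>)) / 4 ]"

definition m0 :: "real \<Rightarrow> real \<Rightarrow> complex poly" where
  "m0 \<theta> \<rho> = smult (complex_of_real (1 / sqrt 2))
      (Poly (map complex_of_real (filt_coeffs \<theta> \<rho>)))"

definition theta0 :: real where "theta0 = arccos (root 4 (5/32))"
definition rho0 :: real where "rho0 = arccos (sqrt (5/4 - sqrt (5/32)))"

end

theory Submission
  imports Defs
begin


lemma lin_dvd_iff: "[:1,1:] dvd (q::complex poly) \<longleftrightarrow> poly q (-1) = 0"
  using poly_eq_0_iff_dvd[of q "-1"] by simp

lemma cancel_lin:
  fixes p q :: "complex poly"
  assumes "p = [:1,1:] * q"
  shows "[:1,1:]^Suc n dvd p \<longleftrightarrow> [:1,1:]^n dvd q"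
  unfolding assms power_Suc by (subst dvd_mult_cancel_left) simp

lemma poly6:
  fixes c0 c1 c2 c3 c4 c5 :: real
  defines "p \<equiv> [:complex_of_real c0, of_real c1, of_real c2, of_real c3, of_real c4, of_real c5:]"
  assumes h0: "c0 - c1 + c2 - c3 + c4 - c5 = 0"
  shows "([:1,1:]^2 dvd p \<longleftrightarrow> c1 - 2*c2 + 3*c3 - 4*c4 + 5*c5 = 0)
       \<and> ([:1,1:]^3 dvd p \<longleftrightarrow> c1 - 2*c2 + 3*c3 - 4*c4 + 5*c5 = 0 \<and> c2 - 3*c3 + 6*c4 - 10*c5 = 0)"
proof -
  define Q1 where "Q1 = [:complex_of_real (c1-c2+c3-c4+c5), of_real (c2-c3+c4-c5), of_real (c3-c4+c5), of_real (c4-c5), of_real c5:]"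
  have e1: "p = [:1,1:] * Q1"
    unfolding p_def Q1_def using h0 by (simp add: algebra_simps of_real_def[symmetric]; simp flip: of_real_add of_real_diff add: algebra_simps)
  have pq1: "poly Q1 (-1) = of_real (c1 - 2*c2 + 3*c3 - 4*c4 + 5*c5)"
    unfolding Q1_def by (simp add: algebra_simps)
  have A: "[:1,1:]^2 dvd p \<longleftrightarrow> c1 - 2*c2 + 3*c3 - 4*c4 + 5*c5 = 0"
  proof -
    have "[:1,1:]^2 dvd p \<longleftrightarrow> [:1,1:] dvd Q1" using cancel_lin[OF e1, of 1] by (metis Suc_1 power_one_right)
    then show ?thesis by (simp only: lin_dvd_iff pq1 of_real_eq_0_iff)
  qed
  have B: "[:1,1:]^3 dvd p \<longleftrightarrow> c1 - 2*c2 + 3*c3 - 4*c4 + 5*c5 = 0 \<and> c2 - 3*c3 + 6*c4 - 10*c5 = 0"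
  proof (cases "c1 - 2*c2 + 3*c3 - 4*c4 + 5*c5 = 0")
    case True
    define Q2 where "Q2 = [:complex_of_real (c2 - 2*c3 + 3*c4 - 4*c5), of_real (c3 - 2*c4 + 3*c5), of_real (c4 - 2*c5), of_real c5:]"
    have e2: "Q1 = [:1,1:] * Q2"
      unfolding Q2_def Q1_def using arg_cong[OF True, of complex_of_real] by (simp add: algebra_simps; simp flip: of_real_add of_real_diff add: algebra_simps)
    have pq2: "poly Q2 (-1) = of_real (c2 - 3*c3 + 6*c4 - 10*c5)"
      unfolding Q2_def by (simp add: algebra_simps)
    have "[:1,1:]^3 dvd p \<longleftrightarrow> [:1,1:]^2 dvd Q1" using cancel_lin[OF e1, of 2] by (metis numeral_3_eq_3 Suc_1 eval_nat_numeral(3))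
    also have "\<dots> \<longleftrightarrow> [:1,1:] dvd Q2" using cancel_lin[OF e2, of 1] by (metis Suc_1 power_one_right)
    finally show ?thesis using True by (simp only: lin_dvd_iff pq2 of_real_eq_0_iff simp_thms)
  next
    case False
    have "\<not> [:1,1:]^3 dvd p"
    proof
      assume "[:1,1:]^3 dvd p"
      then have "[:1,1:]^2 dvd p" by (rule dvd_trans[rotated]) (simp add: le_imp_power_dvd)
      with A False show False by simp
    qed
    with False show ?thesis by simp
  qed
  from A B show ?thesis by simp
qed


definition S :: real where "S = sqrt (5/32)"

lemma S_facts: "S^2 = 5/32" "S > 1/4" "S < 1/2"
proof -
  show "S^2 = 5/32" unfolding S_def by simp
  have "sqrt (1/16) < sqrt (5/32::real)" by (subst real_sqrt_less_iff) simp
  moreover have "sqrt (1/16::real) = 1/4" by (rule real_sqrt_unique) (auto simp: power2_eq_square)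
  ultimately show "S > 1/4" unfolding S_def by simp
  have "sqrt (5/32) < sqrt (1/4::real)" by (subst real_sqrt_less_iff) simp
  moreover have "sqrt (1/4::real) = 1/2" by (rule real_sqrt_unique) (auto simp: power2_eq_square)
  ultimately show "S < 1/2" unfolding S_def by simp
qed

lemma theta0_facts: "cos (2*theta0) = 2*S - 1" "sin (2*theta0) > 0"
proof -
  define R where "R = root 4 (5/32::real)"
  have R0: "R > 0" unfolding R_def by simp
  have R4: "R^4 = 5/32" unfolding R_def by (simp add: real_root_pow_pos2)
  have R2: "R^2 = S" unfolding S_def
    by (rule real_sqrt_unique[symmetric]) (use R4 in \<open>simp_all flip: power_mult\<close>)
  have R1: "R < 1" using R2 S_facts R0
  proof -
    have "R^2 < 1" using R2 S_facts by simp
    then show ?thesis using R0 abs_square_less_1[of R] by simp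
  qed
  have th: "theta0 = arccos R" unfolding theta0_def R_def ..
  show "cos (2*theta0) = 2*S - 1" unfolding th cos_double_cos using R0 R1 R2 by simp
  have "sin (arccos R) > 0" using R0 R1 R2 S_facts by (simp add: sin_arccos_abs)
  then show "sin (2*theta0) > 0" unfolding th sin_double using R0 R1 by simp
qed

lemma rho0_facts: "cos (2*rho0) = 3/2 - 2*S" "sin (2*rho0) > 0"
proof -
  define Q where "Q = sqrt (5/4 - S)"
  have Q0: "Q > 0" unfolding Q_def using S_facts by simp
  have Q2: "Q^2 = 5/4 - S" unfolding Q_def using S_facts by simp
  have Q1: "Q < 1"
  proof -
    have "Q^2 < 1" using Q2 S_facts by simp
    then show ?thesis using Q0 abs_square_less_1[of Q] by simp
  qed
  have th: "rho0 = arccos Q" unfolding rho0_def Q_def S_def ..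
  show "cos (2*rho0) = 3/2 - 2*S" unfolding th cos_double_cos using Q0 Q1 Q2 by simp
  have "sin (arccos Q) > 0" using Q0 Q1 Q2 S_facts by (simp add: sin_arccos_abs)
  then show "sin (2*rho0) > 0" unfolding th sin_double using Q0 Q1 by simp
qed

lemma shift2: fixes x :: real shows "sin (x + 2 * of_int m * pi) = sin x" "cos (x + 2 * of_int m * pi) = cos x"
proof -
  have "sin (2 * pi * of_int m) = 0" "cos (2 * pi * of_int m) = 1" by simp_all
  then show "sin (x + 2 * of_int m * pi) = sin x" "cos (x + 2 * of_int m * pi) = cos x"
    by (simp_all add: sin_add cos_add mult.commute mult.left_commute)
qed

lemma sh:
  fixes x y :: real
  assumes "x = y + of_int m * pi"
  shows "sin (2*x) = sin (2*y)" "cos (2*x) = cos (2*y)"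
proof -
  have e: "2*x = 2*y + 2 * of_int m * pi" using assms by (simp add: algebra_simps)
  show "sin (2*x) = sin (2*y)" unfolding e by (rule shift2)
  show "cos (2*x) = cos (2*y)" unfolding e by (rule shift2)
qed

lemma cos_eq_cases:
  fixes x y :: real
  assumes "cos (2*x) = cos (2*y)"
  obtains m :: int where "x = y + of_int m * pi" | m :: int where "x = - y + of_int m * pi"
proof -
  from assms obtain n where n: "n \<in> \<int>" and h: "2*x = 2*y + 2*n*pi \<or> 2*x = -(2*y) + 2*n*pi"
    unfolding cos_eq by blast
  from n obtain m where m: "n = of_int m" by (auto elim: Ints_cases)
  from h show ?thesis
  proof
    assume "2*x = 2*y + 2*n*pi" then have "x = y + of_int m * pi" using m by simp
    then show ?thesis by (rule that(1))
  next
    assume "2*x = -(2*y) + 2*n*pi" then have "x = - y + of_int m * pi" using m by simp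
    then show ?thesis by (rule that(2))
  qed
qed

lemma k1: fixes a b c d :: real assumes H1: "a + c = 1/2" and H2: "b + d = 2*(b*c - a*d)"
  shows "d*(1+2*a) = -2*a*b" using H1 H2 by algebra
lemma k2: fixes a b c d :: real assumes H1: "a + c = 1/2" and E: "d*(1+2*a) = -2*a*b"
    and P1: "a^2 + b^2 = 1" and P2: "c^2 + d^2 = 1"
  shows "2*a^2 + 4*a + 3/4 = 0" using H1 E P1 P2 by algebra
lemma k3: fixes a S :: real assumes "2*a^2 + 4*a + 3/4 = 0" "S^2 = 5/32" shows "(a+1)^2 = (2*S)^2"
 using assms by algebra
lemma k4: fixes x y :: real assumes "x^2 = y^2" "x \<ge> 0" "y \<ge> 0" shows "x = y"
  using power2_eq_iff_nonneg[of x y] assms by blast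

lemma key_identity:
  fixes a b c d :: real
  assumes H1: "a + c = 1/2" and H2: "b + d = 2*(b*c - a*d)"
    and P1: "a^2 + b^2 = 1" and P2: "c^2 + d^2 = 1"
  shows "a = 2*S - 1" "b*d > 0"
proof -
  have E: "d*(1+2*a) = -2*a*b" by (rule k1[OF H1 H2])
  have Q: "2*a^2 + 4*a + 3/4 = 0" by (rule k2[OF H1 E P1 P2])
  have sq: "(a+1)^2 = (2*S)^2" by (rule k3[OF Q S_facts(1)])
  have "a^2 \<le> 1" using P1 zero_le_power2[of b] by linarith
  then have "\<bar>a\<bar> \<le> 1" using abs_square_le_1[of a] by blast
  then have a1: "a + 1 \<ge> 0" by linarith
  have "2*S \<ge> 0" using S_facts(2) by linarith
  then show A: "a = 2*S - 1" using k4[OF sq a1] by linarith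
  have b0: "b \<noteq> 0"
  proof
    assume "b = 0"
    then have "a^2 = 1" using P1 by simp
    then have "\<bar>a\<bar> = 1" using abs_square_eq_1 by blast
    then show False using A S_facts(2) S_facts(3) by linarith
  qed
  have "b*d*(1+2*a) = -2*a*b^2" using E by algebra
  moreover have "b^2 > 0" using b0 by simp
  moreover have "-2*a > 0" using A S_facts(3) by linarith
  ultimately have X: "b*d*(1+2*a) > 0" using mult_pos_pos[of "-2*a" "b^2"] by simp
  moreover have "1 + 2*a > 0" using A S_facts(2) by linarith
  ultimately show "b*d > 0" using zero_less_mult_iff[of "b*d" "1+2*a"] by (meson not_less_iff_gr_or_eq less_asym)
qed

lemma t1: fixes a c S :: real assumes "a = 2*S - 1" "c = 3/2 - 2*S" "S^2 = 5/32"
  shows "(1 - c^2)*(1+2*a)^2 = 4*a^2*(1-a^2)" using assms by algebra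
lemma t2: fixes a b c d :: real assumes "d*(1+2*a) = -2*a*b" "a = 2*S - 1" "c = 3/2 - 2*S"
  shows "b + d = 2*(b*c - a*d)" using assms by algebra
lemma t3: fixes x y :: real assumes "x^2 = y^2" "x > 0" "y > 0" shows "x = y"
  using power2_eq_iff_nonneg[of x y] assms by (meson less_imp_le)

lemma base_eq: "sin (2*theta0) + sin (2*rho0) = 2 * (sin (2*theta0) * cos (2*rho0) - cos (2*theta0) * sin (2*rho0))"
proof -
  define a b c d where "a = cos (2*theta0)" "b = sin (2*theta0)" "c = cos (2*rho0)" "d = sin (2*rho0)"
  have a: "a = 2*S - 1" and c: "c = 3/2 - 2*S" and b: "b > 0" and d: "d > 0"
    using theta0_facts rho0_facts unfolding a_b_c_d_def by auto
  have P1: "a^2 + b^2 = 1" and P2: "c^2 + d^2 = 1" unfolding a_b_c_d_def by simp_all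
  have sq: "(d*(1+2*a))^2 = (-2*a*b)^2"
  proof -
    have "(d*(1+2*a))^2 = (1 - c^2)*(1+2*a)^2" using P2 by (simp add: power_mult_distrib)
    also have "\<dots> = 4*a^2*(1-a^2)" using t1[OF a c S_facts(1)] .
    also have "\<dots> = (-2*a*b)^2" using P1 by (simp add: power_mult_distrib)
    finally show ?thesis .
  qed
  have "d*(1+2*a) > 0" using d a S_facts by simp
  moreover have "-2*a*b > 0" using b a S_facts by (simp add: mult_pos_pos)
  ultimately have "d*(1+2*a) = -2*a*b" using sq t3 by blast
  then have "b + d = 2*(b*c - a*d)" using a c t2 by blast
  then show ?thesis unfolding a_b_c_d_def .
qed

lemma trig_char:
  fixes \<theta> \<rho> :: real
  shows "(cos (2*\<theta>) + cos (2*\<rho>) = 1/2 \<and> sin (2*\<theta>) + sin (2*\<rho>) = 2 * sin (2*\<theta> - 2*\<rho>))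
     \<longleftrightarrow> (\<exists>s \<in> {1, -1::real}. \<exists>m n :: int.
                \<theta> = s * theta0 + of_int m * pi \<and> \<rho> = s * rho0 + of_int n * pi)"
proof
  assume asm: "cos (2*\<theta>) + cos (2*\<rho>) = 1/2 \<and> sin (2*\<theta>) + sin (2*\<rho>) = 2 * sin (2*\<theta> - 2*\<rho>)"
  have H2: "sin (2*\<theta>) + sin (2*\<rho>) = 2 * (sin (2*\<theta>) * cos (2*\<rho>) - cos (2*\<theta>) * sin (2*\<rho>))"
    using asm by (simp add: sin_diff)
  have KA: "cos (2*\<theta>) = 2*S - 1" and KB: "sin (2*\<theta>) * sin (2*\<rho>) > 0"
    using key_identity[OF conjunct1[OF asm] H2 sin_cos_squared_add2 sin_cos_squared_add2] by simp_all
  have KC: "cos (2*\<rho>) = 3/2 - 2*S" using asm KA by simp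
  have ct: "cos (2*\<theta>) = cos (2*theta0)" using KA theta0_facts by simp
  have cr: "cos (2*\<rho>) = cos (2*rho0)" using KC rho0_facts by simp
  show "\<exists>s \<in> {1, -1::real}. \<exists>m n :: int. \<theta> = s * theta0 + of_int m * pi \<and> \<rho> = s * rho0 + of_int n * pi"
  proof (rule cos_eq_cases[OF ct]; rule cos_eq_cases[OF cr])
    fix m n :: int assume t: "\<theta> = theta0 + of_int m * pi" and r: "\<rho> = rho0 + of_int n * pi"
    then show ?thesis by (intro bexI[of _ 1]) auto
  next
    fix m n :: int assume t: "\<theta> = - theta0 + of_int m * pi" and r: "\<rho> = - rho0 + of_int n * pi"
    then show ?thesis by (intro bexI[of _ "-1"]) auto
  next
    fix m n :: int assume t: "\<theta> = theta0 + of_int m * pi" and r: "\<rho> = - rho0 + of_int n * pi"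
    have "sin (2*\<theta>) = sin (2*theta0)" using sh(1)[OF t] by simp
    moreover have "sin (2*\<rho>) = - sin (2*rho0)" using sh(1)[OF r] by simp
    ultimately have "sin (2*\<theta>) * sin (2*\<rho>) < 0" using theta0_facts rho0_facts by (simp add: mult_pos_pos)
    with KB show ?thesis by simp
  next
    fix m n :: int assume t: "\<theta> = - theta0 + of_int m * pi" and r: "\<rho> = rho0 + of_int n * pi"
    have "sin (2*\<theta>) = - sin (2*theta0)" using sh(1)[OF t] by simp
    moreover have "sin (2*\<rho>) = sin (2*rho0)" using sh(1)[OF r] by simp
    ultimately have "sin (2*\<theta>) * sin (2*\<rho>) < 0" using theta0_facts rho0_facts by (simp add: mult_pos_pos)
    with KB show ?thesis by simp
  qed
next
  assume "\<exists>s \<in> {1, -1::real}. \<exists>m n :: int. \<theta> = s * theta0 + of_int m * pi \<and> \<rho> = s * rho0 + of_int n * pi"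
  then obtain s and m n :: int where s: "s \<in> {1, -1}" and t: "\<theta> = s * theta0 + of_int m * pi" and r: "\<rho> = s * rho0 + of_int n * pi"
    by blast
  have ct: "cos (2*\<theta>) = cos (2*theta0) \<and> sin (2*\<theta>) = s * sin (2*theta0)"
    using s sh[OF t] by auto
  have cr: "cos (2*\<rho>) = cos (2*rho0) \<and> sin (2*\<rho>) = s * sin (2*rho0)"
    using s sh[OF r] by auto
  have "sin (2*\<theta>) + sin (2*\<rho>) = s * (sin (2*theta0) + sin (2*rho0))" using ct cr by (simp add: algebra_simps)
  also have "\<dots> = s * (2 * (sin (2*theta0) * cos (2*rho0) - cos (2*theta0) * sin (2*rho0)))"
    by (simp only: base_eq)
  also have "\<dots> = 2 * (sin (2*\<theta>) * cos (2*\<rho>) - cos (2*\<theta>) * sin (2*\<rho>))"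
    using ct cr by (simp add: algebra_simps)
  finally have "sin (2*\<theta>) + sin (2*\<rho>) = 2 * sin (2*\<theta> - 2*\<rho>)" by (simp add: sin_diff)
  moreover have "cos (2*\<theta>) + cos (2*\<rho>) = 1/2" using ct cr theta0_facts rho0_facts by simp
  ultimately show "cos (2*\<theta>) + cos (2*\<rho>) = 1/2 \<and> sin (2*\<theta>) + sin (2*\<rho>) = 2 * sin (2*\<theta> - 2*\<rho>)" by simp
qed

lemma lin1:
  fixes a0 a1 a2 a3 a4 a5 Ca Sa Cb Sb Cc Sc :: real
  assumes "a0 = (1 - Ca - Sa - Cb - Sb + Cc + Sc) / 4"
    "a1 = (1 + Ca - Sa + Cb - Sb + Cc - Sc) / 4"
    "a2 = (1 - Cc - Sc) / 2" "a3 = (1 - Cc + Sc) / 2"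
    "a4 = (1 + Ca + Sa + Cb + Sb + Cc + Sc) / 4"
    "a5 = (1 - Ca + Sa - Cb + Sb + Cc - Sc) / 4"
  shows "a0 - a1 + a2 - a3 + a4 - a5 = 0"
  unfolding assms by (simp add: field_simps)

lemma lin2:
  fixes a0 a1 a2 a3 a4 a5 Ca Sa Cb Sb Cc Sc :: real
  assumes "a0 = (1 - Ca - Sa - Cb - Sb + Cc + Sc) / 4"
    "a1 = (1 + Ca - Sa + Cb - Sb + Cc - Sc) / 4"
    "a2 = (1 - Cc - Sc) / 2" "a3 = (1 - Cc + Sc) / 2"
    "a4 = (1 + Ca + Sa + Cb + Sb + Cc + Sc) / 4"
    "a5 = (1 - Ca + Sa - Cb + Sb + Cc - Sc) / 4"
  shows "a1 - 2*a2 + 3*a3 - 4*a4 + 5*a5 = 1 - 2*(Ca + Cb)"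
  unfolding assms by (simp add: field_simps)

lemma lin3:
  fixes a0 a1 a2 a3 a4 a5 Ca Sa Cb Sb Cc Sc :: real
  assumes "a0 = (1 - Ca - Sa - Cb - Sb + Cc + Sc) / 4"
    "a1 = (1 + Ca - Sa + Cb - Sb + Cc - Sc) / 4"
    "a2 = (1 - Cc - Sc) / 2" "a3 = (1 - Cc + Sc) / 2"
    "a4 = (1 + Ca + Sa + Cb + Sb + Cc + Sc) / 4"
    "a5 = (1 - Ca + Sa - Cb + Sb + Cc - Sc) / 4"
  shows "a2 - 3*a3 + 6*a4 - 10*a5 = -2 + 4*(Ca + Cb) - Sa - Sb + 2 * Sc"
  unfolding assms by (simp add: field_simps)

lemma aux2: fixes x y u v w :: real assumes "x + y = 1/2"
  shows "(-2 + 4*(x+y) - u - v + 2 * w = 0) \<longleftrightarrow> (u + v = 2 * w)"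
proof -
  have "4*(x+y) = 2" using assms by simp
  then show ?thesis by (simp add: algebra_simps; linarith?)
qed

theorem proposition8p12:
  fixes \<theta> \<rho> :: real
  shows "([:1, 1:] ^ 2 dvd m0 \<theta> \<rho> \<longleftrightarrow> cos (2*\<theta>) + cos (2*\<rho>) = 1/2)
       \<and> ([:1, 1:] ^ 3 dvd m0 \<theta> \<rho> \<longleftrightarrow>
            cos (2*\<theta>) + cos (2*\<rho>) = 1/2 \<and>
            sin (2*\<theta>) + sin (2*\<rho>) = 2 * sin (2*\<theta> - 2*\<rho>))
       \<and> ([:1, 1:] ^ 3 dvd m0 \<theta> \<rho> \<longleftrightarrow>
            (\<exists>s \<in> {1, -1::real}. \<exists>m n :: int.
                \<theta> = s * theta0 + of_int m * pi \<and> \<rho> = s * rho0 + of_int n * pi))"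
proof -
  define a0 where "a0 = (1 - cos (2*\<theta>) - sin (2*\<theta>) - cos (2*\<rho>) - sin (2*\<rho>)
         + cos (2*\<theta> - 2*\<rho>) + sin (2*\<theta> - 2*\<rho>)) / 4"
  define a1 where "a1 = (1 + cos (2*\<theta>) - sin (2*\<theta>) + cos (2*\<rho>) - sin (2*\<rho>)
         + cos (2*\<theta> - 2*\<rho>) - sin (2*\<theta> - 2*\<rho>)) / 4"
  define a2 where "a2 = (1 - cos (2*\<theta> - 2*\<rho>) - sin (2*\<theta> - 2*\<rho>)) / 2"
  define a3 where "a3 = (1 - cos (2*\<theta> - 2*\<rho>) + sin (2*\<theta> - 2*\<rho>)) / 2"
  define a4 where "a4 = (1 + cos (2*\<theta>) + sin (2*\<theta>) + cos (2*\<rho>) + sin (2*\<rho>)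
         + cos (2*\<theta> - 2*\<rho>) + sin (2*\<theta> - 2*\<rho>)) / 4"
  define a5 where "a5 = (1 - cos (2*\<theta>) + sin (2*\<theta>) - cos (2*\<rho>) + sin (2*\<rho>)
         + cos (2*\<theta> - 2*\<rho>) - sin (2*\<theta> - 2*\<rho>)) / 4"
  have fc: "filt_coeffs \<theta> \<rho> = [a0, a1, a2, a3, a4, a5]"
    unfolding filt_coeffs_def a0_def a1_def a2_def a3_def a4_def a5_def ..
  define p where "p = [:complex_of_real a0, of_real a1, of_real a2, of_real a3, of_real a4, of_real a5:]"
  have mp: "m0 \<theta> \<rho> = smult (complex_of_real (1 / sqrt 2)) p"
    unfolding m0_def fc p_def by simp
  have k0: "complex_of_real (1 / sqrt 2) \<noteq> 0" by simp
  have dv: "\<And>n. [:1,1:]^n dvd m0 \<theta> \<rho> \<longleftrightarrow> [:1,1:]^n dvd p"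
    unfolding mp using dvd_smult_iff[OF k0] by blast
  have h0: "a0 - a1 + a2 - a3 + a4 - a5 = 0"
    by (rule lin1[OF a0_def a1_def a2_def a3_def a4_def a5_def])
  have E1: "a1 - 2*a2 + 3*a3 - 4*a4 + 5*a5 = 1 - 2*(cos (2*\<theta>) + cos (2*\<rho>))"
    by (rule lin2[OF a0_def a1_def a2_def a3_def a4_def a5_def])
  have E2: "a2 - 3*a3 + 6*a4 - 10*a5 = -2 + 4*(cos (2*\<theta>) + cos (2*\<rho>)) - sin (2*\<theta>) - sin (2*\<rho>) + 2 * sin (2*\<theta> - 2*\<rho>)"
    by (rule lin3[OF a0_def a1_def a2_def a3_def a4_def a5_def])
  have main: "([:1,1:]^2 dvd p \<longleftrightarrow> a1 - 2*a2 + 3*a3 - 4*a4 + 5*a5 = 0)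
       \<and> ([:1,1:]^3 dvd p \<longleftrightarrow> a1 - 2*a2 + 3*a3 - 4*a4 + 5*a5 = 0 \<and> a2 - 3*a3 + 6*a4 - 10*a5 = 0)"
    unfolding p_def by (rule poly6[OF h0])
  have A: "[:1, 1:] ^ 2 dvd m0 \<theta> \<rho> \<longleftrightarrow> cos (2*\<theta>) + cos (2*\<rho>) = 1/2"
  proof -
    have "(1 - 2*(cos (2*\<theta>) + cos (2*\<rho>)) = 0) \<longleftrightarrow> cos (2*\<theta>) + cos (2*\<rho>) = 1/2" by (simp add: field_simps)
    then show ?thesis using main dv[of 2] E1 by presburger
  qed
  have B: "[:1, 1:] ^ 3 dvd m0 \<theta> \<rho> \<longleftrightarrow>
            cos (2*\<theta>) + cos (2*\<rho>) = 1/2 \<and>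
            sin (2*\<theta>) + sin (2*\<rho>) = 2 * sin (2*\<theta> - 2*\<rho>)"
  proof -
    have "(1 - 2*(cos (2*\<theta>) + cos (2*\<rho>)) = 0) \<longleftrightarrow> cos (2*\<theta>) + cos (2*\<rho>) = 1/2" by (simp add: field_simps)
    moreover have "cos (2*\<theta>) + cos (2*\<rho>) = 1/2 \<Longrightarrow> (-2 + 4*(cos (2*\<theta>) + cos (2*\<rho>)) - sin (2*\<theta>) - sin (2*\<rho>) + 2 * sin (2*\<theta> - 2*\<rho>) = 0)
       \<longleftrightarrow> sin (2*\<theta>) + sin (2*\<rho>) = 2 * sin (2*\<theta> - 2*\<rho>)" by (rule aux2)
    ultimately show ?thesis using main dv[of 3] E1 E2 by metis
  qed
  show ?thesis using A B trig_char[of \<theta> \<rho>] by blast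
qed

end
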